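(* Let $f:[1/\sqrt2,1)\to\mathbb{R}$, $f(q)=(4q^4-5q^2+1)\mathrm{K}(q)+(-8q^4+8q^2-1)\mathrm{E}(q)$. Then there exists a unique $\hat q\in(1/\sqrt2,q_* )$ such that $f(\hat q)=0$. In addition, $f>0$ on $[1/\sqrt2,\hat q)$ and $f<0$ on $(\hat q,1)$.
   Context: For $q\in[0,1)$, $\mathrm{K}(q)=\int_0^{\pi/2}(1-q^2\sin^2\theta)^{-1/2}\,d\theta$ and $\mathrm{E}(q)=\int_0^{\pi/2}(1-q^2\sin^2\theta)^{1/2}\,d\theta$ are the complete elliptic integrals of the first and second kind. The function $q\mapsto2\mathrm{E}(q)-\mathrm{K}(q)$ is strictly decreasing on $[0,1)$ and $q_*\in(0,1)$ denotes its unique zero. *)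

theory Defs
  imports "HOL-Analysis.Analysis"
begin

definition ellK :: "real \<Rightarrow> real" where
  "ellK q = integral {0..pi/2} (\<lambda>\<theta>. 1 / sqrt (1 - q^2 * (sin \<theta>)^2))"

definition ellE :: "real \<Rightarrow> real" where
  "ellE q = integral {0..pi/2} (\<lambda>\<theta>. sqrt (1 - q^2 * (sin \<theta>)^2))"

definition qstar :: real where
  "qstar = (THE q. 0 < q \<and> q < 1 \<and> 2 * ellE q - ellK q = 0)"

definition fhat :: "real \<Rightarrow> real" where
  "fhat q = (4*q^4 - 5*q^2 + 1) * ellK q + (-8*q^4 + 8*q^2 - 1) * ellE q"

end

theory Submission imports Defs begin

lemma dpos: fixes q t :: real assumes "0 \<le> q" "q < 1" shows "0 < 1 - q^2 * (sin t)^2"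
proof -
  have "q^2 < 1" using power_strict_mono[of q 1 2] assms by simp
  moreover have "(sin t)^2 \<le> 1" by (simp add: abs_square_le_1)
  ultimately have "q^2 * (sin t)^2 < 1"
    by (metis less_eq_real_def mult_le_one mult_less_cancel_left1 zero_le_power2 not_less)
  then show ?thesis by simp
qed

lemma sqnz: fixes q t :: real assumes "0 \<le> q" "q < 1" shows "sqrt (1 - q^2 * (sin t)^2) \<noteq> 0"
  using dpos[OF assms, of t] by simp

lemma contK: "continuous_on ({0..<1} \<times> cbox 0 (pi/2)) (\<lambda>(q, t). 1 / sqrt (1 - q^2 * (sin t)^2))"
proof -
  have "continuous_on ({0..<1} \<times> cbox 0 (pi/2)) (\<lambda>z. 1 / sqrt (1 - (fst z)^2 * (sin (snd z))^2))"
    proof (intro continuous_intros ballI)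
    fix z :: "real \<times> real" assume "z \<in> {0..<1} \<times> cbox 0 (pi/2)"
    then show "sqrt (1 - (fst z)^2 * (sin (snd z))^2) \<noteq> 0" using dpos[of "fst z" "snd z"] by auto
  qed
  then show ?thesis by (simp add: case_prod_unfold)
qed

lemma contE: "continuous_on ({0..<1} \<times> cbox 0 (pi/2)) (\<lambda>(q, t). sqrt (1 - q^2 * (sin t)^2))"
proof -
  have "continuous_on ({0..<1} \<times> cbox 0 (pi/2)) (\<lambda>z. sqrt (1 - (fst z)^2 * (sin (snd z))^2))"
    by (intro continuous_intros)
  then show ?thesis by (simp add: case_prod_unfold)
qed

lemma contellK: "continuous_on {0..<1} ellK"
  using integral_continuous_on_param[OF contK] unfolding ellK_def by (simp add: cbox_interval)

lemma contellE: "continuous_on {0..<1} ellE"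
  using integral_continuous_on_param[OF contE] unfolding ellE_def by (simp add: cbox_interval)

lemma intK: assumes "0 \<le> q" "q < 1"
  shows "(\<lambda>t. 1 / sqrt (1 - q^2 * (sin t)^2)) integrable_on {0..pi/2}"
  by (intro integrable_continuous_interval continuous_intros) (use sqnz[OF assms] in auto)

lemma intE: "(\<lambda>t. sqrt (1 - q^2 * (sin t)^2)) integrable_on {0..pi/2}"
  by (intro integrable_continuous_interval continuous_intros)


lemma ellK_has: assumes "0 \<le> q" "q < 1"
  shows "((\<lambda>t. 1 / sqrt (1 - q^2 * (sin t)^2)) has_integral ellK q) {0..pi/2}"
  unfolding ellK_def using intK[OF assms] by (rule integrable_integral)

lemma ellE_has: "((\<lambda>t. sqrt (1 - q^2 * (sin t)^2)) has_integral ellE q) {0..pi/2}"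
  unfolding ellE_def using intE by (rule integrable_integral)

lemma monoE: fixes a b :: real assumes "0 \<le> a" "a \<le> b" shows "ellE b \<le> ellE a"
proof -
  have "a^2 \<le> b^2" using assms by (simp add: power_mono)
  then have "\<And>t. sqrt (1 - b^2 * (sin t)^2) \<le> sqrt (1 - a^2 * (sin t)^2)"
    by (simp add: mult_right_mono)
  then show ?thesis using has_integral_le[OF ellE_has ellE_has] by blast
qed

lemma monoK: fixes a b :: real assumes "0 \<le> a" "a \<le> b" "b < 1" shows "ellK a \<le> ellK b"
proof -
  have "a^2 \<le> b^2" using assms by (simp add: power_mono)
  then have "\<And>t. sqrt (1 - b^2 * (sin t)^2) \<le> sqrt (1 - a^2 * (sin t)^2)"
    by (simp add: mult_right_mono)
  then have "\<And>t. 1 / sqrt (1 - a^2 * (sin t)^2) \<le> 1 / sqrt (1 - b^2 * (sin t)^2)"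
    using dpos[of b] dpos[of a] assms by (intro divide_left_mono) (auto intro!: mult_pos_pos)
  then show ?thesis using has_integral_le[OF ellK_has ellK_has] assms by force
qed

lemma Kge: fixes q :: real assumes "0 \<le> q" "q < 1" shows "pi/2 \<le> ellK q"
proof -
  have "\<And>t. 1 \<le> 1 / sqrt (1 - q^2 * (sin t)^2)"
  proof -
    fix t
    have "sqrt (1 - q^2 * (sin t)^2) \<le> 1" by simp
    then show "1 \<le> 1 / sqrt (1 - q^2 * (sin t)^2)" using dpos[OF assms, of t] by simp
  qed
  moreover have "((\<lambda>t. 1) has_integral pi/2) {0..pi/2}"
    using has_integral_const_real[of "1::real" 0 "pi/2"] by simp
  ultimately show ?thesis using has_integral_le[OF _ ellK_has[OF assms]] by blast
qed

lemma Ele: fixes q :: real shows "ellE q \<le> pi/2"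
proof -
  have "\<And>t. sqrt (1 - q^2 * (sin t)^2) \<le> 1" by simp
  moreover have "((\<lambda>t. 1) has_integral pi/2) {0..pi/2}"
    using has_integral_const_real[of "1::real" 0 "pi/2"] by simp
  ultimately show ?thesis using has_integral_le[OF ellE_has] by blast
qed

lemma Egt: fixes q :: real assumes "0 \<le> q" "q < 1" shows "0 < ellE q"
proof -
  have "\<And>t. sqrt (1 - q^2) \<le> sqrt (1 - q^2 * (sin t)^2)"
    by (simp add: abs_square_le_1 mult_left_le)
  moreover have "((\<lambda>t. sqrt (1 - q^2)) has_integral sqrt (1 - q^2) * (pi/2)) {0..pi/2}"
    using has_integral_const_real[of "sqrt (1 - q^2)" 0 "pi/2"] by (simp add: algebra_simps)
  ultimately have "sqrt (1 - q^2) * (pi/2) \<le> ellE q" using has_integral_le[OF _ ellE_has] by blast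
  moreover have "0 < sqrt (1 - q^2)" using dpos[OF assms, of "pi/2"] by simp
  moreover have "0 < sqrt (1 - q^2) * (pi/2)" using calculation(2) by simp
  ultimately show ?thesis by linarith
qed

lemma sin2: "((\<lambda>t. (sin t)^2) has_integral pi/4) {0..pi/2}"
proof -
  have "((\<lambda>t. (sin t)^2) has_integral ((\<lambda>t. t/2 - sin t * cos t / 2) (pi/2) - (\<lambda>t. t/2 - sin t * cos t / 2) 0)) {0..pi/2}"
  proof (rule fundamental_theorem_of_calculus)
    fix x :: real
    have "((\<lambda>t. t/2 - sin t * cos t / 2) has_real_derivative (1/2 - (cos x * cos x + sin x * (- sin x))/2)) (at x within {0..pi/2})"
      by (auto intro!: derivative_eq_intros)
    moreover have "1/2 - (cos x * cos x + sin x * (- sin x))/2 = (sin x)^2"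
      using sin_cos_squared_add[of x] by (simp add: power2_eq_square field_simps)
    ultimately show "((\<lambda>t. t/2 - sin t * cos t / 2) has_vector_derivative (sin x)^2) (at x within {0..pi/2})"
      by (simp add: has_real_derivative_iff_has_vector_derivative)
  qed simp
  then show ?thesis by simp
qed

lemma cos2: "((\<lambda>t. 1 - (sin t)^2) has_integral pi/4) {0..pi/2}"
proof -
  have "((\<lambda>t. 1 - (sin t)^2) has_integral (pi/2 - pi/4)) {0..pi/2}"
  proof -
    have c: "((\<lambda>t. 1) has_integral pi/2) {0..pi/2}"
      using has_integral_const_real[of "1::real" 0 "pi/2"] by simp
    show ?thesis using has_integral_diff[OF c sin2] by simp
  qed
  then show ?thesis by simp
qed


lemma sqrt_diff_ge: fixes u v :: real assumes "0 \<le> v" "v \<le> u" "u \<le> 1"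
  shows "(u - v) / 2 \<le> sqrt u - sqrt v"
proof -
  have e: "(sqrt u - sqrt v) * (sqrt u + sqrt v) = sqrt u * sqrt u - sqrt v * sqrt v"
    by (simp add: ring_distribs)
  have "sqrt u * sqrt u = u" "sqrt v * sqrt v = v" using assms by auto
  with e have e2: "(sqrt u - sqrt v) * (sqrt u + sqrt v) = u - v" by simp
  have "sqrt u \<le> 1" "sqrt v \<le> 1" using assms by auto
  then have s2: "sqrt u + sqrt v \<le> 2" by linarith
  have d0: "0 \<le> sqrt u - sqrt v" using assms by simp
  have "(sqrt u - sqrt v) * (sqrt u + sqrt v) \<le> (sqrt u - sqrt v) * 2"
    using mult_left_mono[OF s2 d0] .
  with e2 have "u - v \<le> (sqrt u - sqrt v) * 2" by simp
  then show ?thesis by simp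
qed

lemma Estrict: fixes a b :: real assumes "0 \<le> a" "a < b" "b < 1"
  shows "ellE b + (b^2 - a^2) * pi / 8 \<le> ellE a"
proof -
  have ab: "a^2 \<le> b^2" using assms by (simp add: power_mono)
  have pt: "sqrt (1 - b^2 * (sin t)^2) + (b^2 - a^2)/2 * (sin t)^2 \<le> sqrt (1 - a^2 * (sin t)^2)" for t
  proof -
    have "((1 - a^2 * (sin t)^2) - (1 - b^2 * (sin t)^2)) / 2 \<le> sqrt (1 - a^2 * (sin t)^2) - sqrt (1 - b^2 * (sin t)^2)"
      using dpos[of b t] assms ab by (intro sqrt_diff_ge) (auto simp: mult_right_mono)
    then show ?thesis by (simp add: algebra_simps)
  qed
  have "((\<lambda>t. sqrt (1 - b^2 * (sin t)^2) + (b^2 - a^2)/2 * (sin t)^2) has_integral (ellE b + (b^2 - a^2)/2 * (pi/4))) {0..pi/2}"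
    by (intro has_integral_add ellE_has has_integral_mult_right sin2)
  from has_integral_le[OF this ellE_has pt] show ?thesis by simp
qed

lemma D_has: fixes q :: real assumes "0 \<le> q" "q < 1"
  shows "((\<lambda>t. 2 * sqrt (1 - q^2 * (sin t)^2) - 1 / sqrt (1 - q^2 * (sin t)^2)) has_integral (2 * ellE q - ellK q)) {0..pi/2}"
  by (intro has_integral_diff has_integral_mult_right ellE_has ellK_has assms)

lemma Dstrict: fixes a b :: real assumes "0 \<le> a" "a < b" "b < 1"
  shows "2 * ellE b - ellK b < 2 * ellE a - ellK a"
proof -
  have "0 < (b^2 - a^2) * pi / 8" using assms by (simp add: power_strict_mono)
  then show ?thesis using Estrict[OF assms] monoK[of a b] assms by linarith
qed

lemma Dhalf: "0 < 2 * ellE (1 / sqrt 2) - ellK (1 / sqrt 2)"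
proof -
  have q: "(1 / sqrt 2 :: real)^2 = 1/2" by (simp add: power_divide)
  have pt: "1 - (sin t)^2 \<le> 2 * sqrt (1 - (1 / sqrt 2)^2 * (sin t)^2) - 1 / sqrt (1 - (1 / sqrt 2)^2 * (sin t)^2)" for t
  proof -
    define w where "w = sqrt (1 - (sin t)^2 / 2)"
    have s1: "(sin t)^2 \<le> 1" by (simp add: abs_square_le_1)
    have w0: "0 < w" unfolding w_def using s1 by simp
    have w1: "w \<le> 1" unfolding w_def by simp
    have ww: "w * w = 1 - (sin t)^2 / 2" unfolding w_def using s1 by simp
    have "2 * w - 1 / w = (1 - (sin t)^2) / w" using w0 ww by (simp add: field_simps)
    moreover have "1 - (sin t)^2 \<le> (1 - (sin t)^2) / w" using w0 w1 s1
      by (simp add: le_divide_eq mult_left_le)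
    ultimately show ?thesis unfolding w_def q by simp
  qed
  have "pi/4 \<le> 2 * ellE (1 / sqrt 2) - ellK (1 / sqrt 2)"
    using has_integral_le[OF cos2 D_has pt] by (simp add: divide_less_eq)
  moreover have "0 < pi/4" by simp
  ultimately show ?thesis by linarith
qed


lemma exp_pi_lt: "exp pi < 1 + 50 * pi"
proof -
  have "exp pi < exp 4" using pi_less_4 by simp
  also have "exp (4::real) = (exp 1)^4" by (simp add: exp_of_nat_mult[symmetric])
  also have "\<dots> \<le> 3^4" using exp_le by (intro power_mono) auto
  also have "(3::real)^4 < 1 + 50 * pi" using pi_gt3 by simp
  finally show ?thesis .
qed

lemma Kbig: "pi < ellK (sqrt (9999/10000))"
proof -
  define q :: real where "q = sqrt (9999/10000)"
  have q0: "0 \<le> q" "q < 1" unfolding q_def by auto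
  have qq: "q^2 = 9999/10000" unfolding q_def by simp
  have pt: "1 / (pi/2 - t + 1/100) \<le> 1 / sqrt (1 - q^2 * (sin t)^2)" if t: "t \<in> {0..pi/2}" for t
  proof -
    have c0: "0 \<le> cos t" using t by (intro cos_ge_zero) auto
    have "cos t = sin (pi/2 - t)" by (simp add: sin_cos_eq)
    also have "\<dots> \<le> pi/2 - t" using t by (intro sin_x_le_x) auto
    finally have c1: "cos t \<le> pi/2 - t" .
    have "1 - q^2 * (sin t)^2 = (cos t)^2 + (sin t)^2 / 10000"
      using sin_cos_squared_add[of t] unfolding qq by (simp add: algebra_simps)
    also have "\<dots> \<le> (pi/2 - t)^2 + 1/10000"
      using c0 c1 by (intro add_mono power_mono) (auto simp: abs_square_le_1)
    also have "\<dots> \<le> (pi/2 - t + 1/100)^2" using t by (simp add: power2_eq_square algebra_simps)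
    finally have "sqrt (1 - q^2 * (sin t)^2) \<le> sqrt ((pi/2 - t + 1/100)^2)"
      by (rule real_sqrt_le_mono)
    also have "\<dots> = pi/2 - t + 1/100" using t by simp
    finally have "sqrt (1 - q^2 * (sin t)^2) \<le> pi/2 - t + 1/100" .
    then show ?thesis using dpos[OF q0, of t] t
      by (intro divide_left_mono) auto
  qed
  have F: "((\<lambda>t. 1 / (pi/2 - t + 1/100)) has_integral
     ((\<lambda>t. - ln (pi/2 - t + 1/100)) (pi/2) - (\<lambda>t. - ln (pi/2 - t + 1/100)) 0)) {0..pi/2}"
  proof (rule fundamental_theorem_of_calculus)
    fix x :: real assume x: "x \<in> {0..pi/2}"
    then have "0 < pi/2 - x + 1/100" by auto
    then have "((\<lambda>t. - ln (pi/2 - t + 1/100)) has_real_derivative (- ((0 - 1 + 0) / (pi/2 - x + 1/100)))) (at x within {0..pi/2})"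
      by (auto intro!: derivative_eq_intros)
    then show "((\<lambda>t. - ln (pi/2 - t + 1/100)) has_vector_derivative 1 / (pi/2 - x + 1/100)) (at x within {0..pi/2})"
      by (simp add: has_real_derivative_iff_has_vector_derivative)
  qed simp
  have e1: "(1 + 50*pi) = (pi/2+1/100)*100" by simp
  have e2: "ln (1 + 50*pi) = ln (pi/2+1/100) + ln 100"
    unfolding e1 using pi_gt_zero by (intro ln_mult_pos) (auto intro: add_pos_pos)
  have e3: "ln (1/100::real) = - ln 100" by (simp add: ln_div)
  have l: "ln (pi/2 + 1/100) - ln (1/100) = ln (1 + 50 * pi)" using e2 e3 by linarith
  have "pi < ln (1 + 50 * pi)"
    using exp_pi_lt by (metis exp_less_cancel_iff exp_ln add_pos_pos pi_gt_zero zero_less_one mult_pos_pos zero_less_numeral)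
  moreover have "ln (1 + 50 * pi) \<le> ellK q"
    using has_integral_le[OF F ellK_has[OF q0] pt] l by simp
  ultimately show ?thesis unfolding q_def by simp
qed


lemma abstract_sign:
  fixes A1 A2 B1 B2 E1 E2 K1 K2 :: real
  assumes "0 < B1" "0 < B2" "A1 < 0" "K1 \<le> K2" "0 < K1" "E2 \<le> E1"
    "A1 * K1 + B1 * E1 \<le> 0" "A2 * B1 - A1 * B2 < 0"
  shows "A2 * K2 + B2 * E2 < 0"
proof -
  have h1: "B1 * (B2 * E2) \<le> B1 * (B2 * E1)" using assms by simp
  have h2: "B2 * (B1 * E1) \<le> B2 * (- A1 * K1)" using assms
    by (intro mult_left_mono) auto
  have "0 \<le> - A1 * B2" using assms by (simp add: mult_neg_pos less_imp_le)
  then have h3: "(- A1 * B2) * K1 \<le> (- A1 * B2) * K2" using assms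
    by (intro mult_left_mono) auto
  have h4: "K2 * (A2 * B1 - A1 * B2) < 0" using assms by (simp add: mult_pos_neg)
  have "B1 * (A2 * K2 + B2 * E2) < 0"
    using h1 h2 h3 h4 by (simp add: algebra_simps)
  then show ?thesis using assms(1) by (simp add: mult_less_0_iff)
qed

definition cA :: "real \<Rightarrow> real" where "cA x = 4*x^2 - 5*x + 1"
definition cB :: "real \<Rightarrow> real" where "cB x = -8*x^2 + 8*x - 1"

lemma fhat_eq: "fhat q = cA (q^2) * ellK q + cB (q^2) * ellE q"
  unfolding fhat_def cA_def cB_def by (simp add: power_mult[symmetric])

lemma key_sign:
  fixes a b :: real
  assumes "1 / sqrt 2 \<le> a" "a < b" "b < 1" "fhat a \<le> 0"
  shows "fhat b < 0"
proof -
  define m n where "m = a^2" and "n = b^2"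
  have a0: "0 \<le> a" using assms(1) by (smt (verit) divide_nonneg_pos real_sqrt_gt_zero)
  have hm: "1/2 \<le> m" unfolding m_def using power_mono[OF assms(1), of 2] by (simp add: power_divide)
  have mn: "m < n" unfolding m_def n_def using a0 assms by (simp add: power_strict_mono)
  have n1: "n < 1" unfolding n_def using a0 assms by (simp add: power_strict_mono abs_square_less_1)
  have K2: "0 < ellK b" using Kge[of b] assms a0 pi_gt_zero by linarith
  have E2: "0 < ellE b" using Egt[of b] assms a0 by linarith
  have An: "cA n < 0" proof -
    have "cA n = (4*n - 1) * (n - 1)" unfolding cA_def by (simp add: algebra_simps power2_eq_square)
    moreover have "0 < 4*n - 1" "n - 1 < 0" using hm mn n1 by auto
    ultimately show ?thesis by (simp add: mult_pos_neg)
  qed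
  show ?thesis
  proof (cases "cB n \<le> 0")
    case True
    have "cA n * ellK b < 0" using An K2 by (simp add: mult_neg_pos)
    moreover have "cB n * ellE b \<le> 0" using True E2 by (simp add: mult_nonpos_nonneg)
    ultimately show ?thesis unfolding fhat_eq n_def by linarith
  next
    case False
    have Bmn: "cB n \<le> cB m" proof -
      have "cB m - cB n = 8 * (n - m) * (m + n - 1)" unfolding cB_def by (simp add: algebra_simps power2_eq_square)
      moreover have "0 \<le> 8 * (n - m) * (m + n - 1)" using hm mn by simp
      ultimately show ?thesis by linarith
    qed
    have Am: "cA m < 0" proof -
      have "cA m = (4*m - 1) * (m - 1)" unfolding cA_def by (simp add: algebra_simps power2_eq_square)
      moreover have "0 < 4*m - 1" "m - 1 < 0" using hm mn n1 by auto
      ultimately show ?thesis by (simp add: mult_pos_neg)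
    qed
    have poly: "cA n * cB m - cA m * cB n < 0" proof -
      have "cA m * cB n - cA n * cB m = (n - m) * (8*(m - 1/2)*(n - 1/2) + 1)"
        unfolding cA_def cB_def by (simp add: algebra_simps power2_eq_square)
      moreover have p: "0 \<le> 8*(m - 1/2)*(n - 1/2)" using hm mn by simp
      have p2: "0 < 8*(m - 1/2)*(n - 1/2) + 1" using p by linarith
      have "0 < (n - m) * (8*(m - 1/2)*(n - 1/2) + 1)" using mn p2
        by (intro mult_pos_pos) auto
      moreover note calculation
      ultimately show ?thesis by linarith
    qed
    show ?thesis unfolding fhat_eq n_def[symmetric]
    proof (rule abstract_sign[OF _ _ Am])
      show "0 < cB m" using False Bmn by linarith
      show "0 < cB n" using False by linarith
      show "ellK a \<le> ellK b" using monoK[of a b] a0 assms by linarith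
      show "0 < ellK a" using Kge[of a] assms a0 pi_gt_zero by linarith
      show "ellE b \<le> ellE a" using monoE[of a b] a0 assms by linarith
      show "cA m * ellK a + cB m * ellE a \<le> 0" using assms(4) unfolding fhat_eq m_def .
      show "cA n * cB m - cA m * cB n < 0" by (rule poly)
    qed
  qed
qed


lemma isqrt2: "0 < 1 / sqrt (2::real)" "1 / sqrt (2::real) < 1"
  by (auto simp: divide_less_eq)

lemma qstar_props: "1 / sqrt 2 < qstar \<and> qstar < 1 \<and> 2 * ellE qstar - ellK qstar = 0"
proof -
  define q1 :: real where "q1 = sqrt (9999/10000)"
  have e: "1 / sqrt 2 = sqrt (1/2::real)" by (simp add: real_sqrt_divide)
  have "sqrt (1/2::real) < sqrt (9999/10000)" by (rule real_sqrt_less_mono) simp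
  moreover have "sqrt (9999/10000::real) < 1" by simp
  ultimately have q1: "1 / sqrt 2 < q1" "q1 < 1" unfolding q1_def e by simp_all
  have Dq1: "2 * ellE q1 - ellK q1 < 0" using Kbig Ele[of q1] unfolding q1_def by linarith
  have cont: "continuous_on {1 / sqrt 2 .. q1} (\<lambda>q. 2 * ellE q - ellK q)"
  proof -
    have sub: "{1 / sqrt 2 .. q1} \<subseteq> {0..<1}"
    proof
      fix x assume "x \<in> {1 / sqrt 2 .. q1}"
      then have "1 / sqrt 2 \<le> x" "x \<le> q1" by auto
      then have "0 \<le> x" "x < 1" using q1 isqrt2 by linarith+
      then show "x \<in> {0..<1}" by simp
    qed
    have cE: "continuous_on {1 / sqrt 2 .. q1} ellE" by (rule continuous_on_subset[OF contellE sub])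
    have cK: "continuous_on {1 / sqrt 2 .. q1} ellK" by (rule continuous_on_subset[OF contellK sub])
    show ?thesis
      by (intro continuous_on_diff continuous_on_mult continuous_on_const cE cK)
  qed
  have "\<exists>x. 1 / sqrt 2 \<le> x \<and> x \<le> q1 \<and> 2 * ellE x - ellK x = 0"
    by (rule IVT2'[of "\<lambda>q. 2 * ellE q - ellK q" q1 0 "1 / sqrt 2", OF _ _ _ cont])
       (use Dq1 Dhalf q1 in linarith)+
  then obtain z where z: "1 / sqrt 2 \<le> z" "z \<le> q1" "2 * ellE z - ellK z = 0" by blast
  have zne: "z \<noteq> 1 / sqrt 2" "z \<noteq> q1"
  proof -
    show "z \<noteq> 1 / sqrt 2"
    proof
      assume h: "z = 1 / sqrt 2"
      show False using z(3) Dhalf unfolding h by linarith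
    qed
    show "z \<noteq> q1"
    proof
      assume h: "z = q1"
      show False using z(3) Dq1 unfolding h by linarith
    qed
  qed
  have zz: "1 / sqrt 2 < z" "z < 1" using z zne q1 by linarith+
  have uniq: "q = z" if "0 < q \<and> q < 1 \<and> 2 * ellE q - ellK q = 0" for q
  proof (rule ccontr)
    assume "q \<noteq> z"
    then consider "q < z" | "z < q" by linarith
    then show False
    proof cases
      case 1
      have "2 * ellE z - ellK z < 2 * ellE q - ellK q" by (rule Dstrict) (use 1 that zz in linarith)+
      then show False using that z by linarith
    next
      case 2
      have "2 * ellE q - ellK q < 2 * ellE z - ellK z" by (rule Dstrict) (use 2 that zz isqrt2 in linarith)+
      then show False using that z by linarith
    qed
  qed
  have z0: "0 < z" using zz isqrt2 by linarith
  have "qstar = z" unfolding qstar_def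
  proof (rule the_equality)
    show "0 < z \<and> z < 1 \<and> 2 * ellE z - ellK z = 0" using z0 zz z(3) by blast
    fix q assume "0 < q \<and> q < 1 \<and> 2 * ellE q - ellK q = 0"
    then show "q = z" by (rule uniq)
  qed
  then show ?thesis using zz z by simp
qed

theorem lemma2p3:
  shows "\<exists>qh. 1 / sqrt 2 < qh \<and> qh < qstar \<and> fhat qh = 0 \<and>
     (\<forall>q. 1 / sqrt 2 < q \<and> q < qstar \<and> fhat q = 0 \<longrightarrow> q = qh) \<and>
     (\<forall>q. 1 / sqrt 2 \<le> q \<and> q < qh \<longrightarrow> fhat q > 0) \<and>
     (\<forall>q. qh < q \<and> q < 1 \<longrightarrow> fhat q < 0)"
proof -
  note qs = qstar_props
  have f0: "0 < fhat (1 / sqrt 2)"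
  proof -
    have "fhat (1 / sqrt 2) = (2 * ellE (1 / sqrt 2) - ellK (1 / sqrt 2)) / 2"
      unfolding fhat_eq cA_def cB_def by (simp add: power_divide)
    then show ?thesis using Dhalf by simp
  qed
  have f1: "fhat qstar < 0"
  proof -
    have K: "ellK qstar = 2 * ellE qstar" using qs by linarith
    have "fhat qstar = ellE qstar * (1 - 2 * qstar^2)"
      unfolding fhat_eq cA_def cB_def K by (simp add: algebra_simps power2_eq_square)
    moreover have "0 < ellE qstar" using Egt[of qstar] qs isqrt2 by linarith
    moreover have "1/2 < qstar^2" using power_strict_mono[of "1 / sqrt 2" qstar 2] qs isqrt2
      by (simp add: power_divide)
    ultimately show ?thesis by (simp add: mult_pos_neg)
  qed
  have cont: "continuous_on {1 / sqrt 2 .. qstar} fhat"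
  proof -
    have sub: "{1 / sqrt 2 .. qstar} \<subseteq> {0..<1}"
    proof
      fix x assume "x \<in> {1 / sqrt 2 .. qstar}"
      then have "1 / sqrt 2 \<le> x" "x \<le> qstar" by auto
      then have "0 \<le> x" "x < 1" using qs isqrt2 by linarith+
      then show "x \<in> {0..<1}" by simp
    qed
    have cE: "continuous_on {1 / sqrt 2 .. qstar} ellE" by (rule continuous_on_subset[OF contellE sub])
    have cK: "continuous_on {1 / sqrt 2 .. qstar} ellK" by (rule continuous_on_subset[OF contellK sub])
    show ?thesis unfolding fhat_def
      by (intro continuous_on_add continuous_on_diff continuous_on_mult continuous_on_const
          continuous_on_power continuous_on_id continuous_on_minus cE cK)
  qed
  have "\<exists>x. 1 / sqrt 2 \<le> x \<and> x \<le> qstar \<and> fhat x = 0"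
    by (rule IVT2'[of fhat qstar 0 "1 / sqrt 2", OF _ _ _ cont]) (use f0 f1 qs in linarith)+
  then obtain z where z: "1 / sqrt 2 \<le> z" "z \<le> qstar" "fhat z = 0" by blast
  have "z \<noteq> 1 / sqrt 2" "z \<noteq> qstar" using z f0 f1 by auto
  then have zz: "1 / sqrt 2 < z" "z < qstar" using z by linarith+
  have zq1: "z < 1" using zz qs by linarith
  have neg: "fhat q < 0" if "z < q" "q < 1" for q
    by (rule key_sign[of z q]) (use z zz that in linarith)+
  show ?thesis
  proof (intro exI conjI allI impI)
    show "1 / sqrt 2 < z" "z < qstar" "fhat z = 0" using zz z by auto
  next
    fix q assume q: "1 / sqrt 2 < q \<and> q < qstar \<and> fhat q = 0"
    show "q = z"
    proof (rule ccontr)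
      assume "q \<noteq> z"
      then consider "q < z" | "z < q" by linarith
      then show False
      proof cases
        case 1
        have "fhat z < 0" by (rule key_sign[of q z]) (use 1 q zq1 in linarith)+
        then show False using z by simp
      next
        case 2 then show False using neg[of q] q qs by linarith
      qed
    qed
  next
    fix q assume q: "1 / sqrt 2 \<le> q \<and> q < z"
    show "0 < fhat q"
    proof (rule ccontr)
      assume "\<not> 0 < fhat q"
      then have "fhat z < 0" by (intro key_sign[of q z]) (use q zq1 in linarith)+
      then show False using z by simp
    qed
  next
    fix q assume "z < q \<and> q < 1"
    then show "fhat q < 0" using neg by auto
  qed
qed

end
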